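(* Let $\gamma\in\mathcal{M}_k\otimes\mathcal{M}_m$ be a state and $W\in\mathcal{M}_k$ an orthogonal projection. Then $F_\gamma\circ G_\gamma(W\mathcal{M}_kW)\subseteq W\mathcal{M}_kW$ if and only if there is an orthogonal projection $V\in\mathcal{M}_m$ such that $\mathrm{tr}(\gamma(W\otimes V^\perp))=\mathrm{tr}(\gamma(W^\perp\otimes V))=0$.
   Context: $\mathcal{M}_k$ denotes the complex $k\times k$ matrices, and $\mathcal{M}_k\otimes\mathcal{M}_m$ is identified with $\mathcal{M}_{km}$ via the Kronecker product. A state is a positive semidefinite Hermitian matrix (not necessarily of trace one). For an orthogonal projection $W$, $W^\perp=\mathrm{Id}-W$, and $W\mathcal{M}_kW=\{WXW:X\in\mathcal{M}_k\}$. For $\gamma=\sum_{i=1}^n A_i\otimes B_i\in\mathcal{M}_k\otimes\mathcal{M}_m$ define $G_\gamma:\mathcal{M}_k\to\mathcal{M}_m$, $G_\gamma(X)=\sum_i\mathrm{tr}(A_iX)B_i$, and $F_\gamma:\mathcal{M}_m\to\mathcal{M}_k$, $F_\gamma(Y)=\sum_i\mathrm{tr}(B_iY)A_i$ (independent of the chosen decomposition). *)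

theory Defs
  imports "HOL-Analysis.Analysis"
begin

text \<open>Matrices in M_k are complex^'k^'k for a finite index type 'k.
  M_k tensor M_m is identified with matrices indexed by 'k \<times> 'm via the Kronecker product.\<close>

definition kron :: "complex^'k^'k \<Rightarrow> complex^'m^'m \<Rightarrow> complex^('k\<times>'m)^('k\<times>'m)" where
  "kron A B = (\<chi> p q. A $ fst p $ fst q * B $ snd p $ snd q)"

definition adjoint_mat :: "complex^'n^'n \<Rightarrow> complex^'n^'n" where
  "adjoint_mat A = (\<chi> i j. cnj (A $ j $ i))"

definition hermitian_mat :: "complex^'n^'n \<Rightarrow> bool" where
  "hermitian_mat A \<longleftrightarrow> adjoint_mat A = A"

text \<open>A state: positive semidefinite Hermitian matrix (trace not normalized).\<close>
definition is_state :: "complex^'n^'n \<Rightarrow> bool" where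
  "is_state A \<longleftrightarrow> hermitian_mat A \<and>
     (\<forall>x :: complex^'n. 0 \<le> Re (\<Sum>i\<in>UNIV. \<Sum>j\<in>UNIV. cnj (x $ i) * A $ i $ j * x $ j))"

definition orth_proj :: "complex^'n^'n \<Rightarrow> bool" where
  "orth_proj P \<longleftrightarrow> P ** P = P \<and> adjoint_mat P = P"

definition perp :: "complex^'n^'n \<Rightarrow> complex^'n^'n" where
  "perp W = mat 1 - W"

definition compression :: "complex^'n^'n \<Rightarrow> (complex^'n^'n) set" where
  "compression W = {W ** X ** W | X. True}"

definition is_decomp :: "complex^('k\<times>'m)^('k\<times>'m) \<Rightarrow> ((complex^'k^'k) \<times> (complex^'m^'m)) list \<Rightarrow> bool" where
  "is_decomp \<gamma> ds \<longleftrightarrow> \<gamma> = sum_list (map (\<lambda>(A, B). kron A B) ds)"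

definition G_map :: "complex^('k\<times>'m)^('k\<times>'m) \<Rightarrow> complex^'k^'k \<Rightarrow> complex^'m^'m" where
  "G_map \<gamma> X = (let ds = (SOME ds. is_decomp \<gamma> ds) in
     sum_list (map (\<lambda>(A, B). (\<chi> i j. trace (A ** X) * B $ i $ j)) ds))"

definition F_map :: "complex^('k\<times>'m)^('k\<times>'m) \<Rightarrow> complex^'m^'m \<Rightarrow> complex^'k^'k" where
  "F_map \<gamma> Y = (let ds = (SOME ds. is_decomp \<gamma> ds) in
     sum_list (map (\<lambda>(A, B). (\<chi> i j. trace (B ** Y) * A $ i $ j)) ds))"

end

theory Submission
  imports Defs
begin


definition emat :: "'n \<Rightarrow> 'n \<Rightarrow> complex^'n^'n" where
  "emat i j = (\<chi> a b. if a = i \<and> b = j then 1 else 0)"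

definition Gf :: "complex^('k\<times>'m)^('k\<times>'m) \<Rightarrow> complex^'k^'k \<Rightarrow> complex^'m^'m" where
  "Gf g X = (\<chi> a b. \<Sum>i\<in>UNIV. \<Sum>j\<in>UNIV. g$(i,a)$(j,b) * X$j$i)"

definition Ff :: "complex^('k\<times>'m)^('k\<times>'m) \<Rightarrow> complex^'m^'m \<Rightarrow> complex^'k^'k" where
  "Ff g Y = (\<chi> i j. \<Sum>a\<in>UNIV. \<Sum>b\<in>UNIV. g$(i,a)$(j,b) * Y$b$a)"

lemma decomp_exists: "\<exists>ds. is_decomp (g :: complex^('k::finite\<times>'m::finite)^('k\<times>'m)) ds"
proof -
  obtain L where L: "set L = (UNIV :: (('k\<times>'m)\<times>('k\<times>'m)) set)" "distinct L"
    using finite_distinct_list[OF finite] by blast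
  define f where "f = (\<lambda>pq::('k\<times>'m)\<times>('k\<times>'m). kron ((\<chi> a b. if a = fst (fst pq) \<and> b = fst (snd pq) then g$fst pq$snd pq else 0) :: complex^'k^'k) (emat (snd (fst pq)) (snd (snd pq))))"
  define ds where "ds = map (\<lambda>pq::('k\<times>'m)\<times>('k\<times>'m). (((\<chi> a b. if a = fst (fst pq) \<and> b = fst (snd pq) then g$fst pq$snd pq else 0) :: complex^'k^'k), emat (snd (fst pq)) (snd (snd pq)))) L"
  have "sum_list (map (\<lambda>(A, B). kron A B) ds) = sum_list (map f L)"
    by (simp add: ds_def f_def o_def case_prod_beta)
  also have "\<dots> = sum f (set L)" using L(2) by (simp add: sum.distinct_set_conv_list)
  also have "\<dots> = g"
  proof -
    have "sum f UNIV $ x $ y = g $ x $ y" for x y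
    proof -
      have "sum f UNIV $ x $ y = (\<Sum>pq\<in>UNIV. if pq = (x,y) then g$x$y else 0)"
        unfolding sum_component by (rule sum.cong) (auto simp: f_def kron_def emat_def prod_eq_iff)
      then show ?thesis by simp
    qed
    then show ?thesis using L(1) by (simp add: vec_eq_iff)
  qed
  finally show ?thesis unfolding is_decomp_def by metis
qed

lemma Gf_add: "Gf (g + h) X = Gf g X + Gf h X"
  by (simp add: Gf_def vec_eq_iff distrib_right sum.distrib)
lemma Gf_zero: "Gf 0 X = 0"
  by (simp add: Gf_def vec_eq_iff)
lemma Ff_add: "Ff (g + h) X = Ff g X + Ff h X"
  by (simp add: Ff_def vec_eq_iff distrib_right sum.distrib)
lemma Ff_zero: "Ff 0 X = 0"
  by (simp add: Ff_def vec_eq_iff)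

lemma Gf_kron: "Gf (kron A B) X = (\<chi> i j. trace (A ** X) * B $ i $ j)"
  by (simp add: Gf_def kron_def vec_eq_iff trace_def matrix_matrix_mult_def sum_distrib_left algebra_simps)
lemma Ff_kron: "Ff (kron A B) Y = (\<chi> i j. trace (B ** Y) * A $ i $ j)"
  by (simp add: Ff_def kron_def vec_eq_iff trace_def matrix_matrix_mult_def sum_distrib_left algebra_simps)

lemma Gd_eq: "sum_list (map (\<lambda>(A, B). (\<chi> i j. trace (A ** X) * B $ i $ j)) ds) = Gf (sum_list (map (\<lambda>(A, B). kron A B) ds)) X"
  by (induction ds) (auto simp: Gf_add Gf_zero Gf_kron)
lemma Fd_eq: "sum_list (map (\<lambda>(A, B). (\<chi> i j. trace (B ** Y) * A $ i $ j)) ds) = Ff (sum_list (map (\<lambda>(A, B). kron A B) ds)) Y"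
  by (induction ds) (auto simp: Ff_add Ff_zero Ff_kron)

lemma G_map_eq: "G_map g X = Gf g X"
proof -
  have "is_decomp g (SOME ds. is_decomp g ds)" using decomp_exists by (rule someI_ex)
  then show ?thesis unfolding G_map_def Let_def Gd_eq is_decomp_def by simp
qed
lemma F_map_eq: "F_map g X = Ff g X"
proof -
  have "is_decomp g (SOME ds. is_decomp g ds)" using decomp_exists by (rule someI_ex)
  then show ?thesis unfolding F_map_def Let_def Fd_eq is_decomp_def by simp
qed



definition cip :: "complex^'n \<Rightarrow> complex^'n \<Rightarrow> complex" where
  "cip x y = (\<Sum>i\<in>UNIV. cnj (x$i) * y$i)"
definition outer :: "complex^'n \<Rightarrow> complex^'n \<Rightarrow> complex^'n^'n" where
  "outer u w = (\<chi> p q. u$p * cnj (w$q))"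
definition sesq :: "complex^'n^'n \<Rightarrow> complex^'n \<Rightarrow> complex^'n \<Rightarrow> complex" where
  "sesq A x y = (\<Sum>i\<in>UNIV. \<Sum>j\<in>UNIV. cnj (x$i) * A$i$j * y$j)"
definition ev :: "'n \<Rightarrow> complex^'n" where
  "ev p = (\<chi> i. if i = p then 1 else 0)"

lemma sesq_add_left: "sesq A (x + z) y = sesq A x y + sesq A z y"
  by (simp add: sesq_def algebra_simps sum.distrib)
lemma sesq_add_right: "sesq A x (y + z) = sesq A x y + sesq A x z"
  by (simp add: sesq_def algebra_simps sum.distrib)
lemma sesq_diff_left: "sesq A (x - z) y = sesq A x y - sesq A z y"
  by (simp add: sesq_def algebra_simps sum_subtractf)
lemma sesq_diff_right: "sesq A x (y - z) = sesq A x y - sesq A x z"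
  by (simp add: sesq_def algebra_simps sum_subtractf)
lemma sesq_scal_left: "sesq A (c *s x) y = cnj c * sesq A x y"
  by (simp add: sesq_def algebra_simps sum_distrib_left)
lemma sesq_scal_right: "sesq A x (c *s y) = c * sesq A x y"
  by (simp add: sesq_def algebra_simps sum_distrib_left)
lemma sesq_mdiff: "sesq (A - B) x y = sesq A x y - sesq B x y"
  by (simp add: sesq_def algebra_simps sum_subtractf)
lemma sum_if_const: "(\<Sum>j\<in>S. if P then f j else 0) = (if P then sum f S else 0)"
  by auto
lemma sesq_ev_left: "sesq A (ev p) x = (\<Sum>j\<in>UNIV. A$p$j * x$j)"
  by (simp add: sesq_def ev_def if_distrib if_distribR sum_if_const cong: if_cong)
lemma sesq_ev_right: "sesq A x (ev p) = (\<Sum>i\<in>UNIV. cnj (x$i) * A$i$p)"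
  by (simp add: sesq_def ev_def if_distrib if_distribR cong: if_cong)
lemma sesq_ev_ev: "sesq A (ev p) (ev q) = A$p$q"
  unfolding sesq_ev_left by (simp add: ev_def if_distrib if_distribR cong: if_cong)
lemma sesq_outer: "sesq (outer u w) x y = cip x u * cip w y"
  apply (simp add: sesq_def outer_def cip_def sum_distrib_left sum_distrib_right algebra_simps)
  by (rule sum.swap)

lemma herm_entry: "hermitian_mat A \<Longrightarrow> A$i$j = cnj (A$j$i)"
  unfolding hermitian_mat_def adjoint_mat_def by (metis vec_lambda_beta complex_cnj_cnj)
lemma herm_cnj: "hermitian_mat A \<Longrightarrow> cnj (A$i$j) = A$j$i"
  using herm_entry[of A j i] by simp
lemma herm_sesq: "hermitian_mat A \<Longrightarrow> sesq A y x = cnj (sesq A x y)"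
proof -
  assume H: "hermitian_mat A"
  have "cnj (sesq A x y) = (\<Sum>i\<in>UNIV. \<Sum>j\<in>UNIV. x$i * A$j$i * cnj (y$j))"
    unfolding sesq_def by (simp add: herm_cnj[OF H])
  also have "\<dots> = (\<Sum>j\<in>UNIV. \<Sum>i\<in>UNIV. x$i * A$j$i * cnj (y$j))" by (rule sum.swap)
  also have "\<dots> = sesq A y x" unfolding sesq_def by (simp add: mult.commute mult.left_commute)
  finally show ?thesis by simp
qed

lemma state_re: "is_state A \<Longrightarrow> 0 \<le> Re (sesq A x x)"
  by (simp add: is_state_def sesq_def)
lemma state_herm: "is_state A \<Longrightarrow> hermitian_mat A"
  by (simp add: is_state_def)
lemma herm_real: "hermitian_mat A \<Longrightarrow> Im (sesq A x x) = 0"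
  using herm_sesq[of A x x] by (metis Reals_cnj_iff complex_is_Real_iff)

lemma diag_zero_row:
  assumes st: "is_state A" and pp: "A$p$p = 0"
  shows "A$p$q = 0"
proof (rule ccontr)
  assume nz: "A$p$q \<noteq> 0"
  have H: "hermitian_mat A" using st by (simp add: is_state_def)
  define a where "a = A$p$q"
  define s where "s = (Re (A$q$q) + 1) / (2 * (cmod a)^2)"
  define t where "t = - (complex_of_real s) * a"
  define x where "x = t *s ev p + ev q"
  have e1: "sesq A x x = cnj t * t * A$p$p + cnj t * A$p$q + t * A$q$p + A$q$q"
    unfolding x_def by (simp add: sesq_add_left sesq_add_right sesq_scal_left sesq_scal_right sesq_ev_ev algebra_simps)
  have "A$q$p = cnj a" using herm_entry[OF H, of q p] a_def by simp
  then have "sesq A x x = cnj t * a + t * cnj a + A$q$q" using e1 pp a_def by simp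
  also have "\<dots> = - 2 * s * (cmod a)^2 + A$q$q"
  proof -
    have "a * cnj a = of_real ((cmod a)^2)" by (metis complex_norm_square)
    then show ?thesis unfolding t_def by (simp add: algebra_simps)
  qed
  finally have "Re (sesq A x x) = - 2 * s * (cmod a)^2 + Re (A$q$q)" by simp
  also have "\<dots> = -1" unfolding s_def using nz a_def by (simp add: field_simps)
  finally show False using state_re[OF st, of x] by simp
qed



lemma psd_step:
  assumes st: "is_state (A::complex^'n^'n)" and Ap: "A$p$p \<noteq> 0"
  defines "d \<equiv> Re (A$p$p)"
  defines "v \<equiv> (\<chi> q. A$q$p / of_real (sqrt d))"
  shows "is_state (A - outer v v) \<and> (A - outer v v)$p = 0 \<and> (\<forall>q. A$q = 0 \<longrightarrow> (A - outer v v)$q = 0)"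
proof -
  have H: "hermitian_mat A" using st by (simp add: is_state_def)
  have "Im (A$p$p) = 0" using herm_real[OF H, of "ev p"] by (simp add: sesq_ev_ev)
  then have App: "A$p$p = of_real d" unfolding d_def by (simp add: complex_eq_iff)
  have "0 \<le> d" using state_re[OF st, of "ev p"] by (simp add: sesq_ev_ev d_def)
  moreover have "d \<noteq> 0" using Ap App by auto
  ultimately have dpos: "d > 0" by simp
  have sq: "of_real (sqrt d) * of_real (sqrt d) = (of_real d :: complex)"
    using dpos by (simp flip: of_real_mult)
  have sqnz: "(of_real (sqrt d) :: complex) \<noteq> 0" using dpos by simp
  have ov: "outer v v $ q $ r = A$q$p * A$p$r / of_real d" for q r
  proof -
    have "outer v v $ q $ r = A$q$p * cnj (A$r$p) / (of_real (sqrt d) * of_real (sqrt d))"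
      by (simp add: outer_def v_def)
    also have "\<dots> = A$q$p * A$p$r / of_real d" by (simp only: herm_cnj[OF H] sq)
    finally show ?thesis .
  qed
  have row_p: "(A - outer v v)$p = 0"
    by (simp add: vec_eq_iff ov App) (use dpos in simp)
  have rows: "\<forall>q. A$q = 0 \<longrightarrow> (A - outer v v)$q = 0"
    by (auto simp: vec_eq_iff ov)
  have herm': "hermitian_mat (A - outer v v)"
  proof -
    have "cnj ((A - outer v v)$j$i) = (A - outer v v)$i$j" for i j
      by (simp add: ov herm_cnj[OF H] ac_simps)
    then show ?thesis unfolding hermitian_mat_def adjoint_mat_def by (simp add: vec_eq_iff)
  qed
  have psd: "0 \<le> Re (sesq (A - outer v v) x x)" for x
  proof -
    define s where "s = (\<Sum>j\<in>UNIV. A$p$j * x$j)"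
    define t where "t = s / of_real d"
    define y where "y = x - t *s ev p"
    have cvx: "cip v x = s / of_real (sqrt d)"
      unfolding cip_def v_def s_def by (simp add: herm_cnj[OF H] sum_divide_distrib)
    have cxv: "cip x v = cnj s / of_real (sqrt d)"
      unfolding cip_def v_def s_def by (simp add: herm_cnj[OF H] sum_divide_distrib mult.commute)
    have e1: "sesq (A - outer v v) x x = sesq A x x - cnj s * s / of_real d"
      by (simp add: sesq_mdiff sesq_outer cvx cxv sq)
    have sl: "sesq A (ev p) x = s" by (simp add: sesq_ev_left s_def)
    have sr: "sesq A x (ev p) = cnj s" using herm_sesq[OF H, of x "ev p"] sl by simp
    have "sesq A y y = sesq A x x - t * cnj s - cnj t * s + cnj t * t * A$p$p"
      unfolding y_def by (simp only: sesq_diff_left sesq_diff_right sesq_scal_left sesq_scal_right sl sr sesq_ev_ev) (simp add: algebra_simps)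
    also have "\<dots> = sesq A x x - cnj s * s / of_real d"
    proof -
      have dnz: "(of_real d :: complex) \<noteq> 0" using dpos by simp
      have "cnj t = cnj s / of_real d" unfolding t_def by simp
      then show ?thesis unfolding App t_def using dnz by (simp add: field_simps)
    qed
    finally have "sesq (A - outer v v) x x = sesq A y y" using e1 by simp
    then show ?thesis using state_re[OF st, of y] by simp
  qed
  show ?thesis using herm' psd row_p rows by (simp add: is_state_def sesq_def)
qed

lemma psd_decomp:
  "is_state (A::complex^'n^'n) \<Longrightarrow> \<exists>(n::nat) v. A = (\<Sum>r<n. outer (v r) (v r))"
proof (induction "card {p. A$p \<noteq> 0}" arbitrary: A rule: less_induct)
  case less
  show ?case
  proof (cases "\<forall>p. A$p = 0")
    case True
    then have "A = 0" by (simp add: vec_eq_iff)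
    then show ?thesis by (intro exI[of _ "0::nat"] exI[of _ "\<lambda>_. 0"]) simp
  next
    case False
    then obtain p where "A$p \<noteq> 0" by auto
    then obtain q where "A$p$q \<noteq> 0" by (auto simp: vec_eq_iff)
    then have Ap: "A$p$p \<noteq> 0" using diag_zero_row[OF less.prems] by blast
    define d where "d = Re (A$p$p)"
    define v :: "complex^'n" where "v = (\<chi> q. A$q$p / of_real (sqrt d))"
    have S: "is_state (A - outer v v) \<and> (A - outer v v)$p = 0 \<and> (\<forall>q. A$q = 0 \<longrightarrow> (A - outer v v)$q = 0)"
      using psd_step[OF less.prems Ap] unfolding d_def v_def by blast
    have sub: "{q. (A - outer v v)$q \<noteq> 0} \<subseteq> {q. A$q \<noteq> 0} - {p}"
      using S by blast
    have "{q. (A - outer v v)$q \<noteq> 0} \<subset> {q. A$q \<noteq> 0}"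
      using sub \<open>A$p \<noteq> 0\<close> by blast
    then have lt: "card {q. (A - outer v v)$q \<noteq> 0} < card {q. A$q \<noteq> 0}"
      by (rule psubset_card_mono[rotated]) simp
    have "is_state (A - outer v v)" using S by simp
    from less.hyps[OF lt this] obtain n w where w: "A - outer v v = (\<Sum>r<(n::nat). outer (w r) (w r))" by blast
    have "(\<Sum>r<Suc n. outer ((w(n:=v)) r) ((w(n:=v)) r)) = (\<Sum>r<n. outer (w r) (w r)) + outer v v"
      by (simp add: sum.lessThan_Suc)
    also have "\<dots> = A" unfolding w[symmetric] by simp
    finally have "A = (\<Sum>r<Suc n. outer ((w(n:=v)) r) ((w(n:=v)) r))" by simp
    then show ?thesis by blast
  qed
qed



lemma sum_pair: "(\<Sum>z\<in>(UNIV::('a::finite\<times>'b::finite) set). f z) = (\<Sum>a\<in>UNIV. \<Sum>b\<in>UNIV. f (a,b))"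
  by (simp add: sum.cartesian_product)

lemma mm_add_r: "(A + B) ** C = A ** C + B ** (C::'a::semiring_1^'n^'m)"
  by (simp add: matrix_matrix_mult_def vec_eq_iff distrib_right sum.distrib)
lemma mm_diff_l: "(A::'a::ring_1^'m^'n) ** (B - C) = A ** B - A ** C"
  by (simp add: matrix_matrix_mult_def vec_eq_iff algebra_simps sum_subtractf)
lemma mm_diff_r: "(A - B) ** (C::'a::ring_1^'n^'m) = A ** C - B ** C"
  by (simp add: matrix_matrix_mult_def vec_eq_iff algebra_simps sum_subtractf)
lemma mm_sum_r: "(sum f S) ** (C::'a::semiring_1^'n^'m) = (\<Sum>r\<in>S. f r ** C)"
  apply (simp add: matrix_matrix_mult_def vec_eq_iff sum_distrib_right)
  apply (intro allI) by (rule sum.swap)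
lemma mm_sum_l: "(C::'a::semiring_1^'n^'m) ** (sum f S) = (\<Sum>r\<in>S. C ** f r)"
  apply (simp add: matrix_matrix_mult_def vec_eq_iff sum_distrib_left)
  apply (intro allI) by (rule sum.swap)

lemma kron_mult: "kron A B ** kron C D = kron (A ** C) (B ** D)"
  by (simp add: kron_def matrix_matrix_mult_def vec_eq_iff sum_pair sum_product algebra_simps)
lemma kron_diff_right: "kron A (B - C) = kron A B - kron A C"
  by (simp add: kron_def vec_eq_iff algebra_simps)
lemma kron_add_right: "kron A (B + C) = kron A B + kron A C"
  by (simp add: kron_def vec_eq_iff algebra_simps)
lemma kron_diff_left: "kron (A - B) C = kron A C - kron B C"
  by (simp add: kron_def vec_eq_iff algebra_simps)
lemma adjoint_kron: "adjoint_mat (kron A B) = kron (adjoint_mat A) (adjoint_mat B)"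
  by (simp add: kron_def adjoint_mat_def vec_eq_iff)

lemma scal_mid: "D ** (\<chi> i j. (c::complex) * B$i$j) ** F = (\<chi> i j. c * (D ** B ** F)$i$j)"
  by (simp add: matrix_matrix_mult_def vec_eq_iff sum_distrib_left sum_distrib_right algebra_simps)

lemma Gf_conj: "Gf (kron C D ** g ** kron E F) X = D ** Gf g (E ** X ** C) ** F"
proof -
  obtain ds where g: "g = sum_list (map (\<lambda>(A, B). kron A B) ds)"
    using decomp_exists[of g] unfolding is_decomp_def by blast
  have "Gf (kron C D ** sum_list (map (\<lambda>(A, B). kron A B) ds) ** kron E F) X
        = D ** Gf (sum_list (map (\<lambda>(A, B). kron A B) ds)) (E ** X ** C) ** F"
  proof (induction ds)
    case Nil
    then show ?case by (simp add: Gf_zero)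
  next
    case (Cons ab ds)
    obtain A B where ab: "ab = (A, B)" by fastforce
    have tr: "trace (C ** A ** E ** X) = trace (A ** (E ** X ** C))"
      by (metis matrix_mul_assoc trace_mul_sym)
    have k: "Gf (kron C D ** kron A B ** kron E F) X = D ** Gf (kron A B) (E ** X ** C) ** F"
      by (simp add: kron_mult Gf_kron scal_mid tr)
    show ?case using Cons k
      by (simp add: ab matrix_add_ldistrib mm_add_r Gf_add)
  qed
  then show ?thesis using g by simp
qed

lemma Ff_conj: "Ff (kron C D ** g ** kron E F) Y = C ** Ff g (F ** Y ** D) ** E"
proof -
  obtain ds where g: "g = sum_list (map (\<lambda>(A, B). kron A B) ds)"
    using decomp_exists[of g] unfolding is_decomp_def by blast
  have "Ff (kron C D ** sum_list (map (\<lambda>(A, B). kron A B) ds) ** kron E F) Y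
        = C ** Ff (sum_list (map (\<lambda>(A, B). kron A B) ds)) (F ** Y ** D) ** E"
  proof (induction ds)
    case Nil
    then show ?case by (simp add: Ff_zero)
  next
    case (Cons ab ds)
    obtain A B where ab: "ab = (A, B)" by fastforce
    have tr: "trace (D ** B ** F ** Y) = trace (B ** (F ** Y ** D))"
      by (metis matrix_mul_assoc trace_mul_sym)
    have k: "Ff (kron C D ** kron A B ** kron E F) Y = C ** Ff (kron A B) (F ** Y ** D) ** E"
      by (simp add: kron_mult Ff_kron scal_mid tr)
    show ?case using Cons k
      by (simp add: ab matrix_add_ldistrib mm_add_r Ff_add)
  qed
  then show ?thesis using g by simp
qed



lemma cip_adj: "cip x (M *v y) = cip (adjoint_mat M *v x) y"
proof -
  have "cip x (M *v y) = (\<Sum>i\<in>UNIV. \<Sum>j\<in>UNIV. cnj (x$i) * M$i$j * y$j)"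
    by (simp add: cip_def matrix_vector_mult_def sum_distrib_left algebra_simps)
  also have "\<dots> = (\<Sum>j\<in>UNIV. \<Sum>i\<in>UNIV. cnj (x$i) * M$i$j * y$j)" by (rule sum.swap)
  also have "\<dots> = cip (adjoint_mat M *v x) y"
    by (simp add: cip_def matrix_vector_mult_def adjoint_mat_def sum_distrib_right sum_distrib_left algebra_simps)
  finally show ?thesis .
qed

lemma sesq_cip: "sesq A x y = cip x (A *v y)"
  by (simp add: sesq_def cip_def matrix_vector_mult_def sum_distrib_left algebra_simps)

lemma trace_outer: "trace (outer v v ** P) = sesq P v v"
proof -
  have "trace (outer v v ** P) = (\<Sum>i\<in>UNIV. \<Sum>j\<in>UNIV. v$i * cnj (v$j) * P$j$i)"
    by (simp add: trace_def outer_def matrix_matrix_mult_def)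
  also have "\<dots> = (\<Sum>j\<in>UNIV. \<Sum>i\<in>UNIV. v$i * cnj (v$j) * P$j$i)" by (rule sum.swap)
  also have "\<dots> = sesq P v v" by (simp add: sesq_def algebra_simps)
  finally show ?thesis .
qed

lemma trace_sum: "trace (sum f S) = (\<Sum>r\<in>S. trace (f r))"
  by (simp add: trace_def) (rule sum.swap)

lemma cip_self: "cip w w = of_real (\<Sum>i\<in>UNIV. (cmod (w$i))^2)"
  unfolding cip_def of_real_sum
  by (rule sum.cong, simp, subst complex_norm_square, rule mult.commute)

lemma proj_sesq: "orth_proj P \<Longrightarrow> sesq P v v = cip (P *v v) (P *v v)"
  unfolding orth_proj_def sesq_cip
  by (metis cip_adj matrix_vector_mul_assoc)

lemma outer_mm: "outer u w ** M = outer u (adjoint_mat M *v w)"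
  by (simp add: outer_def matrix_matrix_mult_def matrix_vector_mult_def adjoint_mat_def vec_eq_iff sum_distrib_left algebra_simps)
lemma mm_outer: "M ** outer u w = outer (M *v u) w"
  by (simp add: outer_def matrix_matrix_mult_def matrix_vector_mult_def vec_eq_iff sum_distrib_right sum_distrib_left algebra_simps)

lemma null_from_trace:
  assumes g: "g = (\<Sum>r<(n::nat). outer (v r) (v r))" and P: "orth_proj P"
    and tr: "trace (g ** P) = 0"
  shows "g ** P = 0 \<and> P ** g = 0"
proof -
  have "trace (g ** P) = (\<Sum>r<n. cip (P *v v r) (P *v v r))"
    unfolding g mm_sum_r trace_sum trace_outer proj_sesq[OF P] ..
  also have "\<dots> = of_real (\<Sum>r<n. \<Sum>i\<in>UNIV. (cmod ((P *v v r)$i))^2)"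
    unfolding cip_self of_real_sum ..
  finally have eq: "trace (g ** P) = of_real (\<Sum>r<n. \<Sum>i\<in>UNIV. (cmod ((P *v v r)$i))^2)" .
  have "of_real (\<Sum>r<n. \<Sum>i\<in>UNIV. (cmod ((P *v v r)$i))^2) = (0::complex)"
    using eq[symmetric] tr by (rule trans)
  then have "(\<Sum>r<n. \<Sum>i\<in>UNIV. (cmod ((P *v v r)$i))^2) = 0"
    by (rule of_real_eq_0_iff[THEN iffD1])
  then have "\<forall>r\<in>{..<n}. (\<Sum>i\<in>UNIV. (cmod ((P *v v r)$i))^2) = 0"
    by (subst (asm) sum_nonneg_eq_0_iff) (auto intro: sum_nonneg)
  then have "\<forall>r\<in>{..<n}. \<forall>i. (cmod ((P *v v r)$i))^2 = 0"
    by (subst (asm) sum_nonneg_eq_0_iff) auto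
  then have z: "\<forall>r<n. P *v v r = 0" by (simp add: vec_eq_iff)
  have adj: "adjoint_mat P = P" using P by (simp add: orth_proj_def)
  have "g ** P = 0" unfolding g mm_sum_r outer_mm adj using z
    by (auto intro!: sum.neutral simp: outer_def vec_eq_iff)
  moreover have "P ** g = 0" unfolding g mm_sum_l mm_outer using z
    by (auto intro!: sum.neutral simp: outer_def vec_eq_iff)
  ultimately show ?thesis by simp
qed

lemma orth_proj_kron: "orth_proj A \<Longrightarrow> orth_proj B \<Longrightarrow> orth_proj (kron A B)"
  by (simp add: orth_proj_def kron_mult adjoint_kron)

lemma orth_proj_perp: "orth_proj A \<Longrightarrow> orth_proj (perp A)"
  unfolding orth_proj_def perp_def
proof (intro conjI)
  assume "A ** A = A \<and> adjoint_mat A = A"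
  then have AA: "A ** A = A" and ad: "adjoint_mat A = A" by auto
  have "(mat 1 - A) ** (mat 1 - A) = mat 1 ** (mat 1 - A) - A ** (mat 1 - A)" by (rule mm_diff_r)
  also have "\<dots> = (mat 1 - A) - (A ** mat 1 - A ** A)" by (simp only: matrix_mul_lid mm_diff_l)
  also have "\<dots> = mat 1 - A" by (simp add: AA)
  finally show "(mat 1 - A) ** (mat 1 - A) = mat 1 - A" .
  have "cnj (A$j$i) = A$i$j" for i j using arg_cong[OF ad, of "\<lambda>M. M$i$j"] by (simp add: adjoint_mat_def)
  then show "adjoint_mat (mat 1 - A) = mat 1 - A"
    by (simp add: adjoint_mat_def vec_eq_iff mat_def)
qed



lemma backward:
  fixes g :: "complex^('k::finite \<times> 'm::finite)^('k \<times> 'm)"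
    and W :: "complex^'k^'k" and V :: "complex^'m^'m"
  assumes st: "is_state g" and PW: "orth_proj W" and PV: "orth_proj V"
    and t1: "trace (g ** kron W (perp V)) = 0" and t2: "trace (g ** kron (perp W) V) = 0"
  shows "(F_map g \<circ> G_map g) ` compression W \<subseteq> compression W"
proof -
  obtain n v where gd: "g = (\<Sum>r<(n::nat). outer (v r) (v r))" using psd_decomp[OF st] by blast
  define P1 where "P1 = kron W (perp V)"
  define P2 where "P2 = kron (perp W) V"
  have z1: "g ** P1 = 0 \<and> P1 ** g = 0"
    using null_from_trace[OF gd _ t1[folded P1_def]] orth_proj_kron[OF PW orth_proj_perp[OF PV]]
    unfolding P1_def by blast
  have z2: "g ** P2 = 0 \<and> P2 ** g = 0"
    using null_from_trace[OF gd _ t2[folded P2_def]] orth_proj_kron[OF orth_proj_perp[OF PW] PV]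
    unfolding P2_def by blast
  have WW: "W ** W = W" and VV: "V ** V = V" using PW PV by (auto simp: orth_proj_def)
  define K where "K = kron W V"
  define KW where "KW = kron W (mat 1 :: complex^'m^'m)"
  define KV where "KV = kron (mat 1 :: complex^'k^'k) V"
  have KW_eq: "KW = K + P1" unfolding KW_def K_def P1_def perp_def kron_diff_right by simp
  have KV_eq: "KV = K + P2" unfolding KV_def K_def P2_def perp_def kron_diff_left by simp
  define G' where "G' = K ** g ** K"
  have a: "KW ** g ** KW = G'"
  proof -
    have "KW ** g = K ** g" using z1 by (simp add: KW_eq mm_add_r)
    moreover have "g ** KW = g ** K" using z1 by (simp add: KW_eq matrix_add_ldistrib)
    ultimately show ?thesis unfolding G'_def by (metis matrix_mul_assoc)
  qed
  have b: "KV ** g ** KV = G'"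
  proof -
    have "KV ** g = K ** g" using z2 by (simp add: KV_eq mm_add_r)
    moreover have "g ** KV = g ** K" using z2 by (simp add: KV_eq matrix_add_ldistrib)
    ultimately show ?thesis unfolding G'_def by (metis matrix_mul_assoc)
  qed
  have KVK: "KV ** K = K" "K ** KV = K" unfolding KV_def K_def by (simp_all add: kron_mult VV)
  have KWK: "KW ** K = K" "K ** KW = K" unfolding KW_def K_def by (simp_all add: kron_mult WW)
  have c: "KV ** G' ** KV = G'" unfolding G'_def by (metis KVK matrix_mul_assoc)
  have d: "KW ** G' ** KW = G'" unfolding G'_def by (metis KWK matrix_mul_assoc)
  have G1: "Gf g (W ** X ** W) = V ** Gf G' X ** V" for X
  proof -
    have "Gf g (W ** X ** W) = Gf G' X"
      using Gf_conj[of W "mat 1" g W "mat 1" X] a unfolding KW_def by simp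
    also have "\<dots> = V ** Gf G' X ** V"
      using Gf_conj[of "mat 1" V G' "mat 1" V X] c unfolding KV_def by simp
    finally show ?thesis .
  qed
  have F1: "Ff g (V ** Y ** V) = W ** Ff G' Y ** W" for Y
  proof -
    have "Ff g (V ** Y ** V) = Ff G' Y"
      using Ff_conj[of "mat 1" V g "mat 1" V Y] b unfolding KV_def by simp
    also have "\<dots> = W ** Ff G' Y ** W"
      using Ff_conj[of W "mat 1" G' W "mat 1" Y] d unfolding KW_def by simp
    finally show ?thesis .
  qed
  show ?thesis
  proof
    fix Z assume "Z \<in> (F_map g \<circ> G_map g) ` compression W"
    then obtain X where Z: "Z = F_map g (G_map g (W ** X ** W))"
      unfolding compression_def by auto
    have "Z = W ** Ff G' (Gf G' X) ** W" unfolding Z G_map_eq F_map_eq G1 F1 ..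
    then show "Z \<in> compression W" unfolding compression_def by blast
  qed
qed



definition tensor :: "complex^'k \<Rightarrow> complex^'m \<Rightarrow> complex^('k\<times>'m)" where
  "tensor a c = (\<chi> p. a$fst p * c$snd p)"

lemma kron_outer: "kron (outer a b) (outer c d) = outer (tensor a c) (tensor b d)"
  by (simp add: kron_def outer_def tensor_def vec_eq_iff algebra_simps)

lemma kron_zero_left: "kron 0 B = 0" by (simp add: kron_def vec_eq_iff)
lemma kron_zero_right: "kron A 0 = 0" by (simp add: kron_def vec_eq_iff)
lemma kron_add_left: "kron (A + B) C = kron A C + kron B C"
  by (simp add: kron_def vec_eq_iff algebra_simps)

lemma kron_sum_left: "kron (sum f S) B = (\<Sum>s\<in>S. kron (f s) B)"
  by (induction S rule: infinite_finite_induct) (auto simp: kron_zero_left kron_add_left)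
lemma kron_sum_right: "kron B (sum f S) = (\<Sum>s\<in>S. kron B (f s))"
  by (induction S rule: infinite_finite_induct) (auto simp: kron_zero_right kron_add_right)

lemma Gf_sum_g: "Gf (sum f S) X = (\<Sum>s\<in>S. Gf (f s) X)"
  by (induction S rule: infinite_finite_induct) (auto simp: Gf_zero Gf_add)
lemma Gf_addX: "Gf g (X + Y) = Gf g X + Gf g Y"
  by (simp add: Gf_def vec_eq_iff distrib_left sum.distrib)
lemma Gf_zeroX: "Gf g 0 = 0"
  by (simp add: Gf_def vec_eq_iff)
lemma Gf_sum_X: "Gf g (sum f S) = (\<Sum>s\<in>S. Gf g (f s))"
  by (induction S rule: infinite_finite_induct) (auto simp: Gf_zeroX Gf_addX)

definition zvec :: "complex^('k\<times>'m) \<Rightarrow> complex^'k \<Rightarrow> complex^'m" where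
  "zvec u y = (\<chi> a. \<Sum>i\<in>UNIV. u$(i,a) * cnj (y$i))"

lemma Gf_outer: "Gf (outer u u) (outer y y) = outer (zvec u y) (zvec u y)"
proof -
  have "Gf (outer u u) (outer y y) $ a $ b = outer (zvec u y) (zvec u y) $ a $ b" for a b
  proof -
    have "outer (zvec u y) (zvec u y) $ a $ b = (\<Sum>i\<in>UNIV. u$(i,a) * cnj (y$i)) * (\<Sum>j\<in>UNIV. cnj (u$(j,b)) * y$j)"
      by (simp add: outer_def zvec_def mult.commute)
    also have "\<dots> = (\<Sum>i\<in>UNIV. \<Sum>j\<in>UNIV. u$(i,a) * cnj (y$i) * (cnj (u$(j,b)) * y$j))"
      by (rule sum_product)
    also have "\<dots> = Gf (outer u u) (outer y y) $ a $ b"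
      unfolding Gf_def outer_def by (simp add: ac_simps)
    finally show ?thesis by simp
  qed
  then show ?thesis by (simp add: vec_eq_iff)
qed

lemma sesq_sum_mat: "sesq (sum f S) x y = (\<Sum>s\<in>S. sesq (f s) x y)"
  by (induction S rule: infinite_finite_induct) (auto simp: sesq_def sum.distrib distrib_left distrib_right)

lemma proj_outer_decomp:
  assumes P: "orth_proj P"
  shows "P = (\<Sum>i\<in>UNIV. outer (column i P) (column i P))"
proof -
  have PP: "P ** P = P" and ad: "adjoint_mat P = P" using P by (auto simp: orth_proj_def)
  have c: "cnj (P$j$i) = P$i$j" for i j using arg_cong[OF ad, of "\<lambda>M. M$i$j"] by (simp add: adjoint_mat_def)
  have e: "P$a$b = (\<Sum>i\<in>UNIV. P$a$i * cnj (P$b$i))" for a b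
    using arg_cong[OF PP, of "\<lambda>M. M$a$b"] by (simp add: matrix_matrix_mult_def c)
  have "(\<Sum>i\<in>UNIV. outer (column i P) (column i P)) $ a $ b = (\<Sum>i\<in>UNIV. P$a$i * cnj (P$b$i))" for a b
    by (simp add: outer_def column_def)
  then have "P$a$b = (\<Sum>i\<in>UNIV. outer (column i P) (column i P)) $ a $ b" for a b
    by (rule trans[OF e[of a b] sym])
  then show ?thesis by (simp add: vec_eq_iff)
qed

lemma cip_conj: "cip y x = cnj (cip x y)"
  by (simp add: cip_def mult.commute)

lemma cip_outer_sq: "cip v x * cip x v = of_real ((cmod (cip x v))^2)"
  by (subst cip_conj, subst complex_norm_square, rule mult.commute)

lemma trace_g_M:
  "trace ((\<Sum>r<(n::nat). outer (v r) (v r)) ** M) = (\<Sum>r<n. sesq M (v r) (v r))"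
  unfolding mm_sum_r trace_sum trace_outer ..



lemma cip_diff_right: "cip e (x - y) = cip e x - cip e y"
  by (simp add: cip_def algebra_simps sum_subtractf)
lemma cip_add_right: "cip e (x + y) = cip e x + cip e y"
  by (simp add: cip_def algebra_simps sum.distrib)
lemma cip_scal_right: "cip e (c *s x) = c * cip e x"
  by (simp add: cip_def algebra_simps sum_distrib_left)
lemma cip_scal_left: "cip (c *s x) e = cnj c * cip x e"
  by (simp add: cip_def algebra_simps sum_distrib_left)
lemma cip_diff_left: "cip (x - y) e = cip x e - cip y e"
  by (simp add: cip_def algebra_simps sum_subtractf)
lemma cip_zero_right: "cip e 0 = 0" by (simp add: cip_def)
lemma cip_sum_right: "cip e (sum f S) = (\<Sum>s\<in>S. cip e (f s))"
  by (induction S rule: infinite_finite_induct) (auto simp: cip_add_right cip_zero_right)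

lemma cip_self_zero: "cip w w = 0 \<Longrightarrow> w = 0"
proof -
  assume "cip w w = 0"
  then have "(\<Sum>i\<in>UNIV. (cmod (w$i))^2) = 0" unfolding cip_self by (rule of_real_eq_0_iff[THEN iffD1])
  then have "\<forall>i. (cmod (w$i))^2 = 0" by (subst (asm) sum_nonneg_eq_0_iff) auto
  then show "w = 0" by (simp add: vec_eq_iff)
qed

lemma cip_self_real: "cip w w = of_real (Re (cip w w))" and cip_self_nonneg: "0 \<le> Re (cip w w)"
  unfolding cip_self by (simp_all add: sum_nonneg)

definition orthonormal_set :: "(complex^'n) set \<Rightarrow> bool" where
  "orthonormal_set E \<longleftrightarrow> (\<forall>e\<in>E. cip e e = 1) \<and> (\<forall>e\<in>E. \<forall>f\<in>E. e \<noteq> f \<longrightarrow> cip e f = 0)"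

definition gs_step :: "(complex^'n) list \<Rightarrow> complex^'n \<Rightarrow> complex^'n" where
  "gs_step es u = u - (\<Sum>e\<in>set es. cip e u *s e)"

fun gs :: "(complex^'n) list \<Rightarrow> (complex^'n) list" where
  "gs [] = []"
| "gs (u # us) = (if gs_step (gs us) u = 0 then gs us
     else (of_real (1 / sqrt (Re (cip (gs_step (gs us) u) (gs_step (gs us) u)))) *s gs_step (gs us) u) # gs us)"

lemma orthonormal_sum_cip:
  assumes "orthonormal_set E" "finite E" "f \<in> E"
  shows "(\<Sum>e\<in>E. c e * cip f e) = c f"
proof -
  have "(\<Sum>e\<in>E. c e * cip f e) = (\<Sum>e\<in>E. if e = f then c e else 0)"
    using assms unfolding orthonormal_set_def by (intro sum.cong) auto
  then show ?thesis using assms by simp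
qed

lemma gs_props:
  "orthonormal_set (set (gs us)) \<and> (\<forall>u\<in>set us. u = (\<Sum>e\<in>set (gs us). cip e u *s e))"
proof (induction us)
  case Nil
  then show ?case by (simp add: orthonormal_set_def)
next
  case (Cons u us)
  define E where "E = set (gs us)"
  have ON: "orthonormal_set E" and rec: "\<forall>x\<in>set us. x = (\<Sum>e\<in>E. cip e x *s e)"
    using Cons unfolding E_def by auto
  define u' where "u' = gs_step (gs us) u"
  have u'_def2: "u' = u - (\<Sum>e\<in>E. cip e u *s e)" unfolding u'_def gs_step_def E_def ..
  have orth: "cip f u' = 0" if "f \<in> E" for f
  proof -
    have "cip f (\<Sum>e\<in>E. cip e u *s e) = (\<Sum>e\<in>E. cip e u * cip f e)"
      by (simp add: cip_sum_right cip_scal_right)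
    also have "\<dots> = cip f u" using orthonormal_sum_cip[OF ON _ that] E_def by simp
    finally show ?thesis unfolding u'_def2 cip_diff_right by simp
  qed
  show ?case
  proof (cases "u' = 0")
    case True
    then have "gs (u # us) = gs us" unfolding u'_def by simp
    moreover have "u = (\<Sum>e\<in>E. cip e u *s e)" using True u'_def2 by simp
    ultimately show ?thesis using ON rec E_def by simp
  next
    case False
    define r where "r = Re (cip u' u')"
    have cr: "cip u' u' = of_real r" unfolding r_def by (rule cip_self_real)
    have "r \<noteq> 0"
    proof
      assume "r = 0"
      then have "cip u' u' = 0" using cr by simp
      then show False using False cip_self_zero by blast
    qed
    then have rpos: "r > 0" using cip_self_nonneg[of u'] r_def by simp
    define nv where "nv = of_real (1 / sqrt r) *s u'"
    have gs_eq: "gs (u # us) = nv # gs us" using False unfolding u'_def nv_def r_def by simp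
    have nn: "cip nv nv = 1"
      unfolding nv_def cip_scal_left cip_scal_right cr using rpos
      by (simp flip: of_real_mult)
    have nf: "cip f nv = 0" if "f \<in> E" for f
      unfolding nv_def cip_scal_right using orth[OF that] by simp
    have fn: "cip nv f = 0" if "f \<in> E" for f
      using nf[OF that] cip_conj[of nv f] by simp
    have notin: "nv \<notin> E" using nn nf by force
    have ON': "orthonormal_set (insert nv E)"
      using ON nn nf fn unfolding orthonormal_set_def by auto
    have fin: "finite E" unfolding E_def by simp
    have nu: "cip nv u *s nv = u'"
    proof -
      have "cip nv u = cip nv u' + cip nv (\<Sum>e\<in>E. cip e u *s e)"
        unfolding u'_def2 cip_diff_right by simp
      also have "cip nv (\<Sum>e\<in>E. cip e u *s e) = 0"
        by (simp add: cip_sum_right cip_scal_right fn)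
      also have "cip nv u' = of_real (sqrt r)"
      proof -
        have rs: "1 / sqrt r * r = sqrt r" using rpos by (simp add: real_div_sqrt)
        have "cip nv u' = of_real (1 / sqrt r * r)"
          unfolding nv_def cip_scal_left cr by simp
        then show ?thesis unfolding rs .
      qed
      finally have "cip nv u = of_real (sqrt r)" by simp
      then show ?thesis unfolding nv_def using rpos
        by (simp add: vec_eq_iff flip: of_real_mult)
    qed
    have recu: "u = (\<Sum>e\<in>insert nv E. cip e u *s e)"
      using notin fin nu u'_def2 by (simp add: sum.insert)
    have recx: "x = (\<Sum>e\<in>insert nv E. cip e x *s e)" if "x \<in> set us" for x
    proof -
      have xe: "x = (\<Sum>e\<in>E. cip e x *s e)" using rec that by blast
      have "cip nv x = cip nv (\<Sum>e\<in>E. cip e x *s e)" by (subst xe, rule refl)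
      also have "\<dots> = 0" by (simp add: cip_sum_right cip_scal_right fn)
      finally have "cip nv x = 0" .
      then show ?thesis using notin fin rec that by (simp add: sum.insert)
    qed
    show ?thesis unfolding gs_eq using ON' recu recx E_def by simp
  qed
qed

lemma gs_closed:
  assumes cl_diff: "\<And>x y. x \<in> S \<Longrightarrow> y \<in> S \<Longrightarrow> x - y \<in> S"
    and cl_scal: "\<And>c x. x \<in> S \<Longrightarrow> c *s x \<in> S"
    and cl_zero: "0 \<in> S"
  shows "set us \<subseteq> S \<Longrightarrow> set (gs us) \<subseteq> S"
proof (induction us)
  case Nil
  then show ?case by simp
next
  case (Cons u us)
  have cl_add: "x + y \<in> S" if "x \<in> S" "y \<in> S" for x y
    using cl_diff[OF that(1) cl_diff[OF cl_zero that(2)]] by simp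
  have cl_sum: "sum f F \<in> S" if "\<And>e. e \<in> F \<Longrightarrow> f e \<in> S" for f F
    using that by (induction F rule: infinite_finite_induct) (auto simp: cl_zero cl_add)
  have IH: "set (gs us) \<subseteq> S" using Cons by simp
  have "(\<Sum>e\<in>set (gs us). cip e u *s e) \<in> S" by (rule cl_sum) (use IH in \<open>auto intro: cl_scal\<close>)
  then have "gs_step (gs us) u \<in> S" unfolding gs_step_def
    using Cons.prems by (intro cl_diff) auto
  then show ?case using IH by (auto intro: cl_scal)
qed



lemma outer_mv: "outer e e *v x = cip e x *s e"
  by (simp add: outer_def matrix_vector_mult_def cip_def vec_eq_iff sum_distrib_left algebra_simps)

lemma mv_sum: "(sum f S) *v x = (\<Sum>s\<in>S. f s *v x)"
  apply (simp add: matrix_vector_mult_def vec_eq_iff sum_distrib_right)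
  apply (intro allI) by (rule sum.swap)

lemma mv_diff: "(A - B) *v x = A *v x - B *v (x::complex^'n)"
  by (simp add: matrix_vector_mult_def vec_eq_iff algebra_simps sum_subtractf)

lemma adjoint_sum_outer: "adjoint_mat (\<Sum>e\<in>E. outer e e) = (\<Sum>e\<in>E. outer e e)"
  by (simp add: adjoint_mat_def outer_def vec_eq_iff mult.commute)

lemma kron_mv: "(kron A B *v u)$(i,a) = (B *v (\<chi> b. \<Sum>j\<in>UNIV. A$i$j * u$(j,b)))$a"
proof -
  have "(kron A B *v u)$(i,a) = (\<Sum>j\<in>UNIV. \<Sum>b\<in>UNIV. A$i$j * B$a$b * u$(j,b))"
    by (simp add: kron_def matrix_vector_mult_def sum_pair)
  also have "\<dots> = (\<Sum>b\<in>UNIV. \<Sum>j\<in>UNIV. A$i$j * B$a$b * u$(j,b))" by (rule sum.swap)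
  also have "\<dots> = (B *v (\<chi> b. \<Sum>j\<in>UNIV. A$i$j * u$(j,b)))$a"
    by (simp add: matrix_vector_mult_def sum_distrib_left algebra_simps)
  finally show ?thesis .
qed

lemma cip_tensor_col:
  assumes "\<And>x y. cnj (A$y$x) = A$x$y"
  shows "cip e (\<chi> b. \<Sum>j\<in>UNIV. A$i$j * u$(j,b)) = cip (tensor (column i A) e) u"
proof -
  have "cip e (\<chi> b. \<Sum>j\<in>UNIV. A$i$j * u$(j,b)) = (\<Sum>b\<in>UNIV. \<Sum>j\<in>UNIV. cnj (e$b) * A$i$j * u$(j,b))"
    by (simp add: cip_def sum_distrib_left algebra_simps)
  also have "\<dots> = (\<Sum>j\<in>UNIV. \<Sum>b\<in>UNIV. cnj (e$b) * A$i$j * u$(j,b))" by (rule sum.swap)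
  also have "\<dots> = cip (tensor (column i A) e) u"
    by (simp add: cip_def tensor_def column_def sum_pair assms algebra_simps)
  finally show ?thesis .
qed

lemma zvec_col:
  assumes "\<And>x y. cnj (A$y$x) = A$x$y"
  shows "(\<chi> b. \<Sum>j\<in>UNIV. A$i$j * u$(j,b)) = zvec u (column i A)"
  by (simp add: zvec_def column_def assms mult.commute)

lemma trace_Ff: "trace (C ** Ff g D) = trace (g ** kron C D)"
proof -
  have "trace (C ** Ff g D) = (\<Sum>i\<in>UNIV. \<Sum>j\<in>UNIV. \<Sum>a\<in>UNIV. \<Sum>b\<in>UNIV. C$i$j * g$(j,a)$(i,b) * D$b$a)"
    by (simp add: trace_def matrix_matrix_mult_def Ff_def sum_distrib_left algebra_simps)
  also have "\<dots> = (\<Sum>j\<in>UNIV. \<Sum>i\<in>UNIV. \<Sum>a\<in>UNIV. \<Sum>b\<in>UNIV. C$i$j * g$(j,a)$(i,b) * D$b$a)"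
    by (rule sum.swap)
  also have "\<dots> = (\<Sum>j\<in>UNIV. \<Sum>a\<in>UNIV. \<Sum>i\<in>UNIV. \<Sum>b\<in>UNIV. C$i$j * g$(j,a)$(i,b) * D$b$a)"
    by (rule sum.cong[OF refl], rule sum.swap)
  also have "\<dots> = trace (g ** kron C D)"
    by (simp add: trace_def matrix_matrix_mult_def kron_def sum_pair algebra_simps)
  finally show ?thesis .
qed

lemma tensor_diff: "tensor a (x - y) = tensor a x - tensor a y"
  by (simp add: tensor_def vec_eq_iff algebra_simps)
lemma tensor_scal: "tensor a (c *s x) = c *s tensor a x"
  by (simp add: tensor_def vec_eq_iff algebra_simps)
lemma tensor_zero: "tensor a 0 = 0"
  by (simp add: tensor_def vec_eq_iff)
lemma cip_zero_left: "cip 0 y = 0"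
  by (simp add: cip_def)

lemma onb_fix:
  assumes "orthonormal_set E" "finite E" "f \<in> E"
  shows "(\<Sum>e\<in>E. cip e f *s e) = f"
proof -
  have "(\<Sum>e\<in>E. cip e f *s e) = (\<Sum>e\<in>E. if e = f then e else 0)"
    using assms unfolding orthonormal_set_def
    by (intro sum.cong) (auto simp: vector_smult_lzero vector_smult_lid)
  then show ?thesis using assms by simp
qed

lemma proj_from_onb:
  assumes ON: "orthonormal_set E" and fin: "finite E"
  defines "V \<equiv> (\<Sum>e\<in>E. outer e e)"
  shows "orth_proj V" and "\<And>x. V *v x = (\<Sum>e\<in>E. cip e x *s e)"
proof -
  show Vx: "V *v x = (\<Sum>e\<in>E. cip e x *s e)" for x
    unfolding V_def mv_sum outer_mv ..
  have "V ** V = (\<Sum>f\<in>E. outer (V *v f) f)" unfolding V_def[of] mm_sum_l mm_outer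
    by (simp add: V_def)
  also have "\<dots> = V" unfolding V_def Vx[unfolded V_def] using onb_fix[OF ON fin]
    by (intro sum.cong) auto
  finally show "orth_proj V" unfolding orth_proj_def using adjoint_sum_outer V_def by simp
qed



lemma g_mult_zero:
  assumes "adjoint_mat M = M" "\<forall>r<(n::nat). M *v v r = 0"
  shows "(\<Sum>r<n. outer (v r) (v r)) ** M = 0"
  unfolding mm_sum_r outer_mm assms(1) using assms(2)
  by (intro sum.neutral) (auto simp: outer_def vec_eq_iff)

lemma sum4_zero:
  fixes f :: "'a \<Rightarrow> 'b \<Rightarrow> 'c \<Rightarrow> 'd \<Rightarrow> real"
  assumes fin: "finite A" "finite B" "finite C" "finite D"
    and nn: "\<And>a b c d. 0 \<le> f a b c d"
    and s: "(\<Sum>a\<in>A. \<Sum>b\<in>B. \<Sum>c\<in>C. \<Sum>d\<in>D. f a b c d) = 0"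
    and m: "a \<in> A" "b \<in> B" "c \<in> C" "d \<in> D"
  shows "f a b c d = 0"
proof -
  have n1: "0 \<le> (\<Sum>c\<in>C. \<Sum>d\<in>D. f a b c d)" for a b by (intro sum_nonneg nn)
  have n2: "0 \<le> (\<Sum>b\<in>B. \<Sum>c\<in>C. \<Sum>d\<in>D. f a b c d)" for a by (intro sum_nonneg nn)
  have "(\<Sum>b\<in>B. \<Sum>c\<in>C. \<Sum>d\<in>D. f a b c d) = 0"
    using s m(1) fin(1) n2 by (simp add: sum_nonneg_eq_0_iff)
  then have "(\<Sum>c\<in>C. \<Sum>d\<in>D. f a b c d) = 0"
    using m(2) fin(2) n1 by (simp add: sum_nonneg_eq_0_iff)
  then have "(\<Sum>d\<in>D. f a b c d) = 0"
    using m(3) fin(3) nn by (simp add: sum_nonneg_eq_0_iff sum_nonneg)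
  then show ?thesis using m(4) fin(4) nn by (simp add: sum_nonneg_eq_0_iff)
qed

lemma forward:
  fixes g :: "complex^('k::finite \<times> 'm::finite)^('k \<times> 'm)"
    and W :: "complex^'k^'k"
  assumes st: "is_state g" and PW: "orth_proj W"
    and hyp: "(F_map g \<circ> G_map g) ` compression W \<subseteq> compression W"
  shows "\<exists>V :: complex^'m^'m. orth_proj V \<and>
            trace (g ** kron W (perp V)) = 0 \<and> trace (g ** kron (perp W) V) = 0"
proof -
  obtain n v where gd: "g = (\<Sum>r<(n::nat). outer (v r) (v r))" using psd_decomp[OF st] by blast
  have WW: "W ** W = W" and adW: "adjoint_mat W = W" using PW by (auto simp: orth_proj_def)
  have cW: "cnj (W$y$x) = W$x$y" for x y using arg_cong[OF adW, of "\<lambda>M. M$x$y"] by (simp add: adjoint_mat_def)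
  have PPW: "orth_proj (perp W)" by (rule orth_proj_perp[OF PW])
  have adPW: "adjoint_mat (perp W) = perp W" using PPW by (auto simp: orth_proj_def)
  have cP: "cnj (perp W$y$x) = perp W$x$y" for x y using arg_cong[OF adPW, of "\<lambda>M. M$x$y"] by (simp add: adjoint_mat_def)
  define colW where "colW l = column l W" for l
  define colP where "colP i = column i (perp W)" for i
  define cv where "cv t l = zvec (v t) (colW l)" for t l
  define xx where "xx i t l = tensor (colP i) (cv t l)" for i t l
  have "W = W ** mat 1 ** W" by (simp add: WW)
  then have "W \<in> compression W" unfolding compression_def by blast
  then have "(F_map g \<circ> G_map g) W \<in> compression W" using hyp by blast
  then obtain Z where FZ: "Ff g (Gf g W) = W ** Z ** W"
    unfolding compression_def by (auto simp: G_map_eq F_map_eq)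
  have pWW: "perp W ** W = 0" unfolding perp_def by (simp add: mm_diff_r WW)
  have "trace (perp W ** Ff g (Gf g W)) = 0"
    unfolding FZ by (simp add: matrix_mul_assoc pWW trace_def)
  then have T0: "trace (g ** kron (perp W) (Gf g W)) = 0" unfolding trace_Ff .
  have Wd: "W = (\<Sum>l\<in>UNIV. outer (colW l) (colW l))" unfolding colW_def by (rule proj_outer_decomp[OF PW])
  have Pd: "perp W = (\<Sum>i\<in>UNIV. outer (colP i) (colP i))" unfolding colP_def by (rule proj_outer_decomp[OF PPW])
  have Gd: "Gf g W = (\<Sum>t<n. \<Sum>l\<in>UNIV. outer (cv t l) (cv t l))"
  proof -
    have "Gf g W = Gf g (\<Sum>l\<in>UNIV. outer (colW l) (colW l))" by (rule arg_cong[OF Wd])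
    also have "\<dots> = (\<Sum>t<n. \<Sum>l\<in>UNIV. outer (cv t l) (cv t l))"
      unfolding gd Gf_sum_g Gf_sum_X Gf_outer cv_def by (rule sum.swap)
    finally show ?thesis .
  qed
  have Kd: "kron (perp W) (Gf g W) = (\<Sum>t<n. \<Sum>l\<in>UNIV. \<Sum>i\<in>UNIV. outer (xx i t l) (xx i t l))"
    unfolding Gd unfolding Pd kron_sum_left kron_sum_right kron_outer xx_def ..
  have "trace (g ** kron (perp W) (Gf g W))
      = (\<Sum>r<n. \<Sum>t<n. \<Sum>l\<in>UNIV. \<Sum>i\<in>UNIV. of_real ((cmod (cip (xx i t l) (v r)))^2))"
    unfolding Kd unfolding gd trace_g_M sesq_sum_mat sesq_outer cip_outer_sq ..
  also have "\<dots> = of_real (\<Sum>r<n. \<Sum>t<n. \<Sum>l\<in>UNIV. \<Sum>i\<in>UNIV. (cmod (cip (xx i t l) (v r)))^2)"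
    unfolding of_real_sum ..
  finally have "of_real (\<Sum>r<n. \<Sum>t<n. \<Sum>l\<in>UNIV. \<Sum>i\<in>UNIV. (cmod (cip (xx i t l) (v r)))^2) = (0::complex)"
    using T0 by simp
  then have s0: "(\<Sum>r<n. \<Sum>t<n. \<Sum>l\<in>UNIV. \<Sum>i\<in>UNIV. (cmod (cip (xx i t l) (v r)))^2) = 0"
    by (rule of_real_eq_0_iff[THEN iffD1])
  have zero: "cip (xx i t l) (v r) = 0" if "r < n" "t < n" for r i t l
    using sum4_zero[OF _ _ _ _ _ s0, of r t l i] that by simp
  define S where "S = {s. \<forall>r<n. \<forall>i. cip (tensor (colP i) s) (v r) = 0}"
  obtain Lk where Lk: "set Lk = (UNIV :: 'k set)" using finite_list[OF finite] by blast
  define cs where "cs = concat (map (\<lambda>t. map (cv t) Lk) [0..<n])"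
  have cs_mem: "cv t l \<in> set cs" if "t < n" for t l using that Lk by (auto simp: cs_def intro!: bexI[of _ t])
  have csS: "set cs \<subseteq> S" using zero by (auto simp: cs_def S_def xx_def)
  have ES: "set (gs cs) \<subseteq> S"
  proof (rule gs_closed[OF _ _ _ csS])
    show "x - y \<in> S" if "x \<in> S" "y \<in> S" for x y
      using that by (simp add: S_def tensor_diff cip_diff_left)
    show "c *s x \<in> S" if "x \<in> S" for c x
      using that by (simp add: S_def tensor_scal cip_scal_left)
    show "0 \<in> S" by (simp add: S_def tensor_zero cip_zero_left)
  qed
  define E where "E = set (gs cs)"
  have ON: "orthonormal_set E" and rec: "\<forall>u\<in>set cs. u = (\<Sum>e\<in>E. cip e u *s e)"
    using gs_props[of cs] unfolding E_def by auto
  have fin: "finite E" unfolding E_def by simp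
  define V where "V = (\<Sum>e\<in>E. outer e e)"
  have PV: "orth_proj V" and Vx: "\<And>x. V *v x = (\<Sum>e\<in>E. cip e x *s e)"
    using proj_from_onb[OF ON fin] unfolding V_def by auto
  have Vc: "V *v cv t l = cv t l" if "t < n" for t l
    unfolding Vx using rec cs_mem[OF that] by metis
  have adV: "adjoint_mat V = V" using PV by (simp add: orth_proj_def)
  have adpV: "adjoint_mat (perp V) = perp V" using orth_proj_perp[OF PV] by (simp add: orth_proj_def)
  have K1: "kron W (perp V) *v v r = 0" if "r < n" for r
  proof -
    have "(kron W (perp V) *v v r)$(i,a) = 0" for i a
    proof -
      have "(kron W (perp V) *v v r)$(i,a) = (perp V *v cv r i)$a"
        unfolding kron_mv zvec_col[OF cW] cv_def colW_def ..
      also have "perp V *v cv r i = 0"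
        unfolding perp_def mv_diff Vc[OF that] by simp
      finally show ?thesis by simp
    qed
    then show ?thesis by (simp add: vec_eq_iff)
  qed
  have K2: "kron (perp W) V *v v r = 0" if "r < n" for r
  proof -
    have "(kron (perp W) V *v v r)$(i,a) = 0" for i a
    proof -
      have ce: "cip e (\<chi> b. \<Sum>j\<in>UNIV. perp W$i$j * v r$(j,b)) = 0" if "e \<in> E" for e
        unfolding cip_tensor_col[OF cP] using ES that \<open>r < n\<close> unfolding S_def E_def colP_def by auto
      have "(kron (perp W) V *v v r)$(i,a) = (V *v (\<chi> b. \<Sum>j\<in>UNIV. perp W$i$j * v r$(j,b)))$a"
        unfolding kron_mv ..
      also have "V *v (\<chi> b. \<Sum>j\<in>UNIV. perp W$i$j * v r$(j,b)) = 0"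
        unfolding Vx using ce by (simp add: sum.neutral)
      finally show ?thesis by simp
    qed
    then show ?thesis by (simp add: vec_eq_iff)
  qed
  have "g ** kron W (perp V) = 0"
    unfolding gd by (rule g_mult_zero) (use K1 in \<open>simp_all add: adjoint_kron adW adpV\<close>)
  moreover have "g ** kron (perp W) V = 0"
    unfolding gd by (rule g_mult_zero) (use K2 in \<open>simp_all add: adjoint_kron adPW adV\<close>)
  ultimately show ?thesis using PV by (intro exI[of _ V]) (simp add: trace_def)
qed


theorem mainTheorem2:
  fixes \<gamma> :: "complex^('k::finite \<times> 'm::finite)^('k \<times> 'm)"
    and W :: "complex^'k^'k"
  assumes "is_state \<gamma>"
    and "orth_proj W"
  shows "((F_map \<gamma> \<circ> G_map \<gamma>) ` compression W \<subseteq> compression W) \<longleftrightarrow>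
         (\<exists>V :: complex^'m^'m. orth_proj V \<and>
            trace (\<gamma> ** kron W (perp V)) = 0 \<and> trace (\<gamma> ** kron (perp W) V) = 0)"
  using forward[OF assms] backward[OF assms(1,2)] by blast

end
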